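(* For every $n\in\mathbb{N}$, both $10^{-n}\det[b_{i+j}]_{0\le i,j\le n}$ and $24^{-n}\det[A_{i+j}]_{0\le i,j\le n}$ are integers.
   Context: For $m\in\mathbb{N}$, the Apéry numbers are $b_m=\sum_{k=0}^m\binom{m}{k}^2\binom{m+k}{k}$ and $A_m=\sum_{k=0}^m\binom{m}{k}^2\binom{m+k}{k}^2$. For a sequence $(a_m)_{m\ge0}$, $\det[a_{i+j}]_{0\le i,j\le n}$ denotes the determinant of the $(n+1)\times(n+1)$ Hankel matrix with $(i,j)$-entry $a_{i+j}$. *)

theory Defs
  imports "Jordan_Normal_Form.Determinant"
begin

definition apery_b :: "nat \<Rightarrow> int" where
  "apery_b m = (\<Sum>k=0..m. int ((m choose k)^2 * ((m+k) choose k)))"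

definition apery_A :: "nat \<Rightarrow> int" where
  "apery_A m = (\<Sum>k=0..m. int ((m choose k)^2 * ((m+k) choose k)^2))"

definition hankel_det :: "(nat \<Rightarrow> int) \<Rightarrow> nat \<Rightarrow> int" where
  "hankel_det a n = det (mat (n+1) (n+1) (\<lambda>(i,j). a (i+j)))"

end

theory Submission
  imports Defs "HOL-Number_Theory.Cong" "HOL-Computational_Algebra.Primes"
begin


lemma divmod_eq:
  fixes p q t x :: nat
  assumes "x = p*q + t" "t < p"
  shows "x div p = q" "x mod p = t"
  using assms by auto

lemma lucas:
  fixes p n k :: nat
  assumes "prime p"
  shows "[n choose k = (n div p choose (k div p)) * (n mod p choose (k mod p))] (mod p)"
proof (induction n arbitrary: k)
  case 0
  have p1: "p > 1" using assms prime_gt_1_nat by blast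
  show ?case
  proof (cases "k = 0")
    case True then show ?thesis by simp
  next
    case False
    then have "\<not>(k div p = 0 \<and> k mod p = 0)" using div_mult_mod_eq[of k p] by auto
    then have "k div p > 0 \<or> k mod p > 0" by auto
    then show ?thesis using False by (auto simp: binomial_eq_0)
  qed
next
  case (Suc n)
  have p1: "p > 1" using assms prime_gt_1_nat by blast
  show ?case
  proof (cases k)
    case 0 then show ?thesis by simp
  next
    case (Suc k')
    define a where "a = n div p"
    define r where "r = n mod p"
    define b where "b = Suc k' div p"
    define s where "s = Suc k' mod p"
    have n_eq: "n = p*a + r" and rp: "r < p" using p1 unfolding a_def r_def by auto
    have k_eq: "Suc k' = p*b + s" and sp: "s < p" using p1 unfolding b_def s_def by auto
    have pas: "Suc n choose Suc k' = (n choose k') + (n choose Suc k')" by simp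
    have IH: "[(n choose k') + (n choose Suc k') =
       (n div p choose (k' div p)) * (n mod p choose (k' mod p)) + (a choose b) * (r choose s)] (mod p)"
      using Suc.IH[of k'] Suc.IH[of "Suc k'"] unfolding a_def r_def b_def s_def
      by (intro cong_add) auto
    have goal: "[(n div p choose (k' div p)) * (n mod p choose (k' mod p)) + (a choose b) * (r choose s)
        = (Suc n div p choose (Suc k' div p)) * (Suc n mod p choose (Suc k' mod p))] (mod p)"
    proof (cases "Suc r < p")
      case True
      have sn: "Suc n div p = a" "Suc n mod p = Suc r"
        using divmod_eq[of "Suc n" p a "Suc r"] True n_eq by auto
      show ?thesis
      proof (cases "s = 0")
        case False
        have "k' = p*b + (s-1)" using k_eq False by auto
        then have kk: "k' div p = b" "k' mod p = s - 1" using divmod_eq[of k' p b "s-1"] sp by auto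
        have "(r choose (s-1)) + (r choose s) = Suc r choose s"
          using False by (cases s) auto
        then show ?thesis using sn kk unfolding a_def[symmetric] r_def[symmetric] b_def[symmetric] s_def[symmetric]
          by (metis add_mult_distrib2 cong_refl)
      next
        case s0: True
        have b1: "b \<ge> 1" using k_eq s0 by (cases b) auto
        have "p*b = p*(b-1) + p" using b1 by (cases b) auto
        then have "k' = p*(b-1) + (p-1)" using k_eq s0 p1 by linarith
        then have kk: "k' div p = b - 1" "k' mod p = p - 1" using divmod_eq[of k' p "b-1" "p-1"] p1 by auto
        have "r choose (p-1) = 0" using True by (simp add: binomial_eq_0)
        then show ?thesis using sn kk s0 True unfolding a_def[symmetric] r_def[symmetric] b_def[symmetric] s_def[symmetric]
          by (simp add: binomial_eq_0)
      qed
    next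
      case False
      then have rp1: "Suc r = p" using rp by auto
      have sn: "Suc n div p = Suc a" "Suc n mod p = 0"
        using divmod_eq[of "Suc n" p "Suc a" 0] rp1 n_eq p1 by auto
      show ?thesis
      proof (cases "s = 0")
        case False
        have "k' = p*b + (s-1)" using k_eq False by auto
        then have kk: "k' div p = b" "k' mod p = s - 1" using divmod_eq[of k' p b "s-1"] sp by auto
        have "(r choose (s-1)) + (r choose s) = p choose s"
          using False rp1 by (cases s) auto
        moreover have "p dvd (p choose s)" using dvd_choose_prime[of s p] False sp assms p1 by auto
        ultimately have "p dvd (a choose b) * (r choose (s-1)) + (a choose b) * (r choose s)"
          by (metis add_mult_distrib2 dvd_mult)
        then show ?thesis using sn kk False unfolding a_def[symmetric] r_def[symmetric] b_def[symmetric] s_def[symmetric]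
          by (simp add: cong_0_iff binomial_eq_0)
      next
        case s0: True
        have b1: "b \<ge> 1" using k_eq s0 by (cases b) auto
        have "p*b = p*(b-1) + p" using b1 by (cases b) auto
        then have "k' = p*(b-1) + (p-1)" using k_eq s0 p1 by linarith
        then have kk: "k' div p = b - 1" "k' mod p = p - 1" using divmod_eq[of k' p "b-1" "p-1"] p1 by auto
        have "(a choose (b-1)) + (a choose b) = Suc a choose b" using b1 by (cases b) auto
        moreover have "r choose (p - 1) = 1" using rp1 by auto
        ultimately show ?thesis using sn kk s0 unfolding a_def[symmetric] r_def[symmetric] b_def[symmetric] s_def[symmetric]
          by simp
      qed
    qed
    show ?thesis using cong_trans[OF IH goal] pas Suc by simp
  qed
qed



lemma lucas2:
  fixes p a b r s :: nat
  assumes p: "prime p" and rp: "r < p" and sp: "s < p"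
  shows "[p*a + (r+s) choose (p*b+s) = (a choose b) * (r+s choose s)] (mod p)"
proof (cases "r + s < p")
  case True
  then show ?thesis using lucas[OF p, of "p*a+(r+s)" "p*b+s"] divmod_eq[of "p*a+(r+s)" p a "r+s"]
     divmod_eq[of "p*b+s" p b s] sp by simp
next
  case False
  define t where "t = r + s - p"
  have p1: "p > 1" using p prime_gt_1_nat by blast
  have tt: "r + s = p*1 + t" "t < s" "t < p" using False rp sp unfolding t_def by auto
  have "[p*a + (r+s) choose (p*b+s) = (Suc a choose b) * (t choose s)] (mod p)"
    using lucas[OF p, of "p*a+(r+s)" "p*b+s"] divmod_eq[of "p*a+(r+s)" p "Suc a" t] tt
     divmod_eq[of "p*b+s" p b s] sp by simp
  then have 1: "[p*a + (r+s) choose (p*b+s) = 0] (mod p)" using tt by (simp add: binomial_eq_0)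
  have "[r+s choose s = (1 choose 0) * (t choose s)] (mod p)"
    using lucas[OF p, of "r+s" s] divmod_eq[of "r+s" p 1 t] tt
     divmod_eq[of "s" p 0 s] sp by simp
  then have "[r+s choose s = 0] (mod p)" using tt by (simp add: binomial_eq_0)
  then have "[(a choose b) * (r+s choose s) = (a choose b) * 0] (mod p)" by (intro cong_mult) auto
  then show ?thesis using 1 by (metis cong_sym cong_trans mult_0_right)
qed

definition T :: "nat \<Rightarrow> nat \<Rightarrow> nat \<Rightarrow> nat" where
  "T e m k = (m choose k)^2 * ((m+k) choose k)^e"

definition F :: "nat \<Rightarrow> nat \<Rightarrow> nat" where
  "F e m = (\<Sum>k\<le>m. T e m k)"

lemma F_alt: assumes "m < N" shows "F e m = (\<Sum>k<N. T e m k)"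
  unfolding F_def
proof (rule sum.mono_neutral_left)
  show "\<forall>i\<in>{..<N} - {..m}. T e m i = 0" by (auto simp: T_def binomial_eq_0)
qed (use assms in auto)

lemma T_lucas:
  fixes p q r i s :: nat
  assumes p: "prime p" and rp: "r < p" and sp: "s < p"
  shows "[T e (p*q+r) (p*i+s) = T e q i * T e r s] (mod p)"
proof -
  have 1: "[p*q+r choose (p*i+s) = (q choose i) * (r choose s)] (mod p)"
    using lucas[OF p, of "p*q+r" "p*i+s"] divmod_eq[of "p*q+r" p q r] divmod_eq[of "p*i+s" p i s] rp sp by simp
  have 2: "[p*q+r + (p*i+s) choose (p*i+s) = (q+i choose i) * (r+s choose s)] (mod p)"
    using lucas2[OF p rp sp, of "q+i" i] by (simp add: algebra_simps)
  have "[T e (p*q+r) (p*i+s) = ((q choose i) * (r choose s))^2 * ((q+i choose i) * (r+s choose s))^e] (mod p)"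
    unfolding T_def by (intro cong_mult cong_pow 1 2)
  then show ?thesis by (simp add: T_def power_mult_distrib algebra_simps)
qed

lemma F_lucas:
  fixes p q r :: nat
  assumes p: "prime p" and rp: "r < p"
  shows "[F e (p*q+r) = F e q * F e r] (mod p)"
proof -
  have p1: "p > 1" using p prime_gt_1_nat by blast
  have "F e (p*q+r) = (\<Sum>j<Suc q * p. T e (p*q+r) j)"
    by (rule F_alt) (use rp in auto)
  also have "\<dots> = (\<Sum>i<Suc q. \<Sum>j\<in>{i*p..<i*p+p}. T e (p*q+r) j)"
    by (rule sum.nat_group[symmetric])
  also have "\<dots> = (\<Sum>i<Suc q. \<Sum>s<p. T e (p*q+r) (p*i+s))"
  proof (rule sum.cong[OF refl])
    fix i
    show "(\<Sum>j\<in>{i*p..<i*p+p}. T e (p*q+r) j) = (\<Sum>s<p. T e (p*q+r) (p*i+s))"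
      by (subst sum.atLeastLessThan_shift_0) (simp add: lessThan_atLeast0 algebra_simps comp_def)
  qed
  finally have eq: "F e (p*q+r) = (\<Sum>i<Suc q. \<Sum>s<p. T e (p*q+r) (p*i+s))" .
  have "[(\<Sum>i<Suc q. \<Sum>s<p. T e (p*q+r) (p*i+s)) = (\<Sum>i<Suc q. \<Sum>s<p. T e q i * T e r s)] (mod p)"
    by (intro cong_sum T_lucas[OF p rp]) auto
  also have "(\<Sum>i<Suc q. \<Sum>s<p. T e q i * T e r s) = (\<Sum>i<Suc q. T e q i) * (\<Sum>s<p. T e r s)"
    by (rule sum_product[symmetric])
  also have "\<dots> = F e q * F e r" using F_alt[of q "Suc q" e] F_alt[of r p e] rp by simp
  finally show ?thesis using eq by simp
qed

lemma F_pow: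
  fixes p c e :: nat
  assumes p: "prime p" and base: "\<And>r. r < p \<Longrightarrow> [F e r = c^r] (mod p)"
    and frob: "[c^p = c] (mod p)"
  shows "[F e m = c^m] (mod p)"
proof (induction m rule: less_induct)
  case (less m)
  have p1: "p > 1" using p prime_gt_1_nat by blast
  show ?case
  proof (cases "m < p")
    case True then show ?thesis using base by auto
  next
    case False
    define q where "q = m div p"
    define r where "r = m mod p"
    have m_eq: "m = p*q + r" and rp: "r < p" using p1 unfolding q_def r_def by auto
    have qm: "q < m" using False p1 unfolding q_def by auto
    have "[F e m = F e q * F e r] (mod p)" using F_lucas[OF p rp, of e q] m_eq by simp
    also have "[F e q * F e r = c^q * c^r] (mod p)"
      by (intro cong_mult less.IH qm base rp)
    also have "[c^q * c^r = (c^p)^q * c^r] (mod p)"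
      by (intro cong_mult cong_pow cong_sym[OF frob] cong_refl)
    also have "(c^p)^q * c^r = c^m" using m_eq by (simp add: power_mult power_add)
    finally show ?thesis .
  qed
qed




lemma cong_scale: fixes a b m k :: nat
  shows "[a = b] (mod m) \<Longrightarrow> [k*a = k*b] (mod k*m)"
  by (simp add: cong_def mod_mult_mult1)

lemma F_vals: "F 1 0 = 1" "F 1 1 = 3" "F 1 2 = 19" "F 1 3 = 147" "F 1 4 = 1251"
  "F 2 0 = 1" "F 2 1 = 5" "F 2 2 = 73"
  by code_simp+

lemma b_cong5: "[F 1 m = 3^m] (mod 5)"
proof (rule F_pow)
  show "prime (5::nat)" by simp
  fix r :: nat assume "r < 5"
  then have "r \<in> {0,1,2,3,4}" by auto
  then show "[F 1 r = 3^r] (mod 5)" by (auto simp: F_vals[simplified] cong_def)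
qed (simp add: cong_def)

lemma b_cong2: "[F 1 m = 1^m] (mod 2)"
proof (rule F_pow)
  show "prime (2::nat)" by simp
  fix r :: nat assume "r < 2"
  then have "r \<in> {0,1}" by auto
  then show "[F 1 r = 1^r] (mod 2)" by (auto simp: F_vals[simplified] cong_def)
qed (simp add: cong_def)

lemma A_cong3: "[F 2 m = 5^m] (mod 3)"
proof (rule F_pow)
  show "prime (3::nat)" by simp
  fix r :: nat assume "r < 3"
  then have "r \<in> {0,1,2}" by auto
  then show "[F 2 r = 5^r] (mod 3)" by (auto simp: F_vals[simplified] cong_def)
qed (simp add: cong_def)

definition X :: "nat \<Rightarrow> nat \<Rightarrow> nat" where "X m k = (m choose k) * ((m+k) choose k)"

lemma even_central: "k \<ge> 1 \<Longrightarrow> even (2*k choose k)"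
proof -
  assume k: "k \<ge> 1"
  then obtain j where j: "k = Suc j" by (cases k) auto
  have "2*k choose k = (Suc (2*j) choose j) + (Suc (2*j) choose Suc j)" using j by simp
  moreover have "Suc (2*j) choose Suc j = Suc (2*j) choose j"
    using binomial_symmetric[of "Suc j" "Suc (2*j)"] by simp
  ultimately show ?thesis by simp
qed

lemma even_X: "k \<ge> 1 \<Longrightarrow> even (X m k)"
proof -
  assume k: "k \<ge> 1"
  show ?thesis
  proof (cases "k \<le> m")
    case False then show ?thesis by (simp add: X_def binomial_eq_0)
  next
    case True
    have "(m+k choose (2*k)) * (2*k choose k) = (m+k choose k) * ((m+k-k) choose (2*k-k))"
      by (rule choose_mult) (use True in auto)
    then have "X m k = (m+k choose (2*k)) * (2*k choose k)" by (simp add: X_def mult_2)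
    then show ?thesis using even_central[OF k] by simp
  qed
qed

lemma sq_even_cong: fixes x :: nat assumes "even x" shows "[x^2 = 2*x] (mod 8)"
proof -
  obtain y where y: "x = 2*y" using assms by blast
  have "[y^2 = y] (mod 2)"
    by (simp add: cong_def mod2_eq_if power2_eq_square)
  then have "[4*y^2 = 4*y] (mod 4*2)" by (rule cong_scale)
  then show ?thesis using y by (simp add: power_mult_distrib)
qed

definition D :: "nat \<Rightarrow> nat" where "D m = (\<Sum>k\<le>m. X m k)"

lemma F2_D: "[F 2 m + 1 = 2 * D m] (mod 8)"
proof -
  have t: "[X m k ^ 2 + (if k = 0 then 1 else 0) = 2 * X m k] (mod 8)" for k
  proof (cases "k = 0")
    case True then show ?thesis by (simp add: X_def cong_def)
  next
    case False then show ?thesis using sq_even_cong[OF even_X[of k m]] by simp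
  qed
  have "F 2 m + 1 = (\<Sum>k\<le>m. X m k ^ 2 + (if k = 0 then 1 else 0))"
    by (simp add: sum.distrib F_def T_def X_def power_mult_distrib)
  also have "[\<dots> = (\<Sum>k\<le>m. 2 * X m k)] (mod 8)" by (intro cong_sum t)
  also have "(\<Sum>k\<le>m. 2 * X m k) = 2 * D m" by (simp add: D_def sum_distrib_left)
  finally show ?thesis .
qed

lemma inner_sum: assumes "j \<le> m"
  shows "(\<Sum>k\<le>m. (m choose k) * (k choose j)) = (m choose j) * 2^(m-j)"
proof -
  have "(\<Sum>k\<le>m. (m choose k) * (k choose j)) = (\<Sum>k\<in>{j..m}. (m choose k) * (k choose j))"
    by (rule sum.mono_neutral_right) (auto simp: binomial_eq_0)
  also have "\<dots> = (\<Sum>k\<in>{j..m}. (m choose j) * ((m-j) choose (k-j)))"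
    by (rule sum.cong[OF refl]) (simp add: choose_mult)
  also have "\<dots> = (m choose j) * (\<Sum>k\<in>{j..m}. ((m-j) choose (k-j)))"
    by (simp add: sum_distrib_left)
  also have "(\<Sum>k\<in>{j..m}. ((m-j) choose (k-j))) = (\<Sum>i\<in>{0..m-j}. ((m-j) choose i))"
    using sum.atLeastAtMost_shift_0[OF assms, of "\<lambda>k. (m-j) choose (k-j)"] by (simp add: comp_def)
  also have "\<dots> = 2^(m-j)" using choose_row_sum[of "m-j"] by (simp add: atMost_atLeast0)
  finally show ?thesis .
qed

lemma delannoy: "D m = (\<Sum>i\<le>m. (m choose i)^2 * 2^i)"
proof -
  have v: "(m+k choose k) = (\<Sum>j\<le>m. (m choose j) * (k choose j))" if "k \<le> m" for k
  proof -
    have "(m+k choose k) = (\<Sum>j\<le>k. (m choose j) * (k choose (k - j)))" by (rule vandermonde[symmetric])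
    also have "\<dots> = (\<Sum>j\<le>k. (m choose j) * (k choose j))"
      by (rule sum.cong[OF refl]) (metis atMost_iff binomial_symmetric)
    also have "\<dots> = (\<Sum>j\<le>m. (m choose j) * (k choose j))"
      by (rule sum.mono_neutral_left) (use that in \<open>auto simp: binomial_eq_0\<close>)
    finally show ?thesis .
  qed
  have "D m = (\<Sum>k\<le>m. \<Sum>j\<le>m. (m choose j) * ((m choose k) * (k choose j)))"
    unfolding D_def X_def
  proof (rule sum.cong[OF refl])
    fix k assume "k \<in> {..m}"
    then have "(m+k choose k) = (\<Sum>j\<le>m. (m choose j) * (k choose j))" using v by simp
    then show "(m choose k) * (m+k choose k) = (\<Sum>j\<le>m. (m choose j) * ((m choose k) * (k choose j)))"
      by (simp add: sum_distrib_left mult_ac)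
  qed
  also have "\<dots> = (\<Sum>j\<le>m. \<Sum>k\<le>m. (m choose j) * ((m choose k) * (k choose j)))"
    by (rule sum.swap)
  also have "\<dots> = (\<Sum>j\<le>m. (m choose j) * ((m choose j) * 2^(m-j)))"
    by (rule sum.cong[OF refl]) (simp add: sum_distrib_left[symmetric] inner_sum)
  also have "\<dots> = (\<Sum>j\<in>{0..m}. (m choose j)^2 * 2^(m-j))"
    by (simp add: atMost_atLeast0 power2_eq_square algebra_simps)
  also have "\<dots> = (\<Sum>i\<in>{0..m}. (m choose (m - i))^2 * 2^(m-(m-i)))"
    by (subst sum.atLeastAtMost_rev) simp
  also have "\<dots> = (\<Sum>i\<le>m. (m choose i)^2 * 2^i)"
    unfolding atMost_atLeast0
    by (rule sum.cong[OF refl]) (metis atLeastAtMost_iff binomial_symmetric diff_diff_cancel)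
  finally show ?thesis .
qed

lemma D_cong: "[D m = 1 + 2*m] (mod 4)"
proof -
  have t: "[(m choose i)^2 * 2^i = (if i = 0 then 1 else 0) + (if i = 1 then 2*m else 0)] (mod 4)" for i
  proof -
    consider "i = 0" | "i = 1" | "i \<ge> 2" by linarith
    then show ?thesis
    proof cases
      case 3
      from 3 obtain j where "i = j + 2" by (metis le_add_diff_inverse2)
      then have "(2::nat)^i = 2^2 * 2^j" by (simp add: power_add)
      then have "4 dvd (2::nat)^i" by simp
      then have "4 dvd (m choose i)^2 * 2^i" by simp
      then show ?thesis using 3 by (simp add: cong_0_iff)
    next
      case 2
      have "[m^2 = m] (mod 2)"
        by (simp add: cong_def mod2_eq_if power2_eq_square)
      then have "[2*m^2 = 2*m] (mod 2*2)" by (rule cong_scale)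
      then show ?thesis using 2 by (simp add: mult_2 mult.commute)
    qed simp
  qed
  have "D m = (\<Sum>i\<le>m. (m choose i)^2 * 2^i)" by (rule delannoy)
  also have "[\<dots> = (\<Sum>i\<le>m. (if i = 0 then 1 else 0) + (if i = 1 then 2*m else 0))] (mod 4)"
    by (intro cong_sum t)
  also have "(\<Sum>i\<le>m. (if i = 0 then 1 else 0) + (if i = 1 then 2*m else 0)) = 1 + 2*m"
    by (cases m) (simp_all add: sum.distrib)
  finally show ?thesis .
qed

lemma pow5_cong: "[5^m + 1 = 2 + 4*m] (mod (8::nat))"
proof (induction m)
  case 0 then show ?case by (simp add: cong_def)
next
  case (Suc m)
  have "[5^m = 1 + 4*m] (mod 8)" using Suc by (metis add.commute cong_add_rcancel_nat numeral_Bit0 numeral_One one_add_one add.assoc)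
  then have "[5*5^m = 5*(1 + 4*m)] (mod 8)" by (rule cong_scalar_left)
  moreover have "[5*(1 + 4*(m::nat)) = 1 + 4*Suc m] (mod 8)"
    unfolding cong_def by presburger
  ultimately have "[5^Suc m = 1 + 4*Suc m] (mod 8)" by (auto intro: cong_trans)
  then show ?case by (metis add.commute cong_add_rcancel_nat numeral_Bit0 numeral_One one_add_one add.assoc)
qed

lemma A_cong8: "[F 2 m = 5^m] (mod 8)"
proof -
  have "[2 * D m = 2 * (1 + 2*m)] (mod 2*4)" using D_cong by (rule cong_scale)
  then have "[F 2 m + 1 = 2 + 4*m] (mod 8)" using F2_D[of m] by (auto simp: algebra_simps intro: cong_trans)
  then have "[F 2 m + 1 = 5^m + 1] (mod 8)" using pow5_cong[of m] by (metis cong_sym cong_trans)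
  then show ?thesis by (metis cong_add_rcancel_nat)
qed




lemma sum_L:
  fixes f :: "nat \<Rightarrow> int"
  assumes "i < N"
  shows "(\<Sum>k\<in>{0..<N}. (if i = k then 1 else if Suc k = i then -c else 0) * f k)
       = (if i = 0 then f 0 else f i - c * f (i-1))"
proof (cases i)
  case 0
  have "(\<Sum>k\<in>{0..<N}. (if i = k then 1 else if Suc k = i then -c else 0) * f k)
      = (\<Sum>k\<in>{0..<N}. (if k = 0 then f k else 0))"
    by (rule sum.cong[OF refl]) (auto simp: 0)
  then show ?thesis using assms 0 by simp
next
  case (Suc i')
  have "(\<Sum>k\<in>{0..<N}. (if i = k then 1 else if Suc k = i then -c else 0) * f k)
      = (\<Sum>k\<in>{0..<N}. (if k = i then f k else 0) + (if k = i' then -c * f k else 0))"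
    by (rule sum.cong[OF refl]) (auto simp: Suc)
  also have "\<dots> = f i - c * f i'" using assms Suc by (simp add: sum.distrib)
  finally show ?thesis using Suc by simp
qed

lemma prod_diag: "prod_list (map (\<lambda>i. if i = 0 then 1 else d) [0..<Suc n]) = (d::int)^n"
  by (induction n) auto

lemma hankel_dvd:
  fixes a :: "nat \<Rightarrow> int"
  assumes dv: "\<And>m. d dvd (a (Suc m) - c * a m)"
  shows "d^n dvd hankel_det a n"
proof -
  define N where "N = Suc n"
  define H where "H = mat N N (\<lambda>(i,j). a (i+j))"
  define L :: "int mat" where "L = mat N N (\<lambda>(i,j). if i = j then 1 else if Suc j = i then -c else 0)"
  define Dm :: "int mat" where "Dm = mat N N (\<lambda>(i,j). if i = j then (if i = 0 then 1 else d) else 0)"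
  define H' where "H' = mat N N (\<lambda>(i,j). if i = 0 then a j else (a (i+j) - c * a (i+j-1)) div d)"
  have carr: "H \<in> carrier_mat N N" "L \<in> carrier_mat N N" "Dm \<in> carrier_mat N N" "H' \<in> carrier_mat N N"
    unfolding H_def L_def Dm_def H'_def by auto
  have eq: "L * H = Dm * H'"
  proof (rule eq_matI)
    fix i j assume ij: "i < dim_row (Dm * H')" "j < dim_col (Dm * H')"
    then have i: "i < N" and j: "j < N" using carr by auto
    have lhs: "(L * H) $$ (i,j) = (if i = 0 then a j else a (i+j) - c * a (i-1+j))"
      using i j sum_L[OF i, of c "\<lambda>k. a (k+j)"]
      by (simp add: L_def H_def scalar_prod_def)
    have "(Dm * H') $$ (i,j) = (\<Sum>k\<in>{0..<N}. (if i = k then (if i = 0 then 1 else d) else 0) * H' $$ (k,j))"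
      using i j by (simp add: Dm_def H'_def scalar_prod_def)
    also have "\<dots> = (if i = 0 then 1 else d) * H' $$ (i,j)"
      using i by (simp add: if_distrib[of "\<lambda>x. x * _"] cong: if_cong)
    also have "\<dots> = (if i = 0 then a j else a (i+j) - c * a (i-1+j))"
    proof (cases i)
      case (Suc i')
      have "d dvd a (Suc i' + j) - c * a (i' + j)" using dv[of "i'+j"] by simp
      then show ?thesis using Suc i j by (simp add: H'_def)
    qed (use i j in \<open>simp add: H'_def\<close>)
    finally show "(L * H) $$ (i,j) = (Dm * H') $$ (i,j)" using lhs by simp
  qed (use carr in auto)
  have "diag_mat L = replicate N 1"
    by (rule nth_equalityI) (auto simp: diag_mat_def L_def)
  then have dL: "det L = 1"
    by (subst det_lower_triangular[OF _ carr(2)]) (auto simp: L_def)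
  have dg: "diag_mat Dm = map (\<lambda>i. if i = 0 then 1 else d) [0..<Suc n]"
    by (auto simp: diag_mat_def Dm_def N_def intro!: map_cong)
  have "det Dm = prod_list (diag_mat Dm)"
    by (rule det_lower_triangular[OF _ carr(3)]) (auto simp: Dm_def)
  also have "\<dots> = d^n" unfolding dg by (rule prod_diag)
  finally have dD: "det Dm = d^n" .
  have "det (L * H) = det H" using det_mult[OF carr(2) carr(1)] dL by simp
  moreover have "det (Dm * H') = d^n * det H'" using det_mult[OF carr(3) carr(4)] dD by simp
  ultimately have "det H = d^n * det H'" using eq by simp
  moreover have "hankel_det a n = det H" unfolding hankel_det_def H_def N_def by simp
  ultimately show ?thesis by simp
qed

lemma apery_b_F: "apery_b m = int (F 1 m)"
  by (simp add: apery_b_def F_def T_def atMost_atLeast0)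

lemma apery_A_F: "apery_A m = int (F 2 m)"
  by (simp add: apery_A_def F_def T_def atMost_atLeast0)

lemma b_cong10: "[F 1 m = 3^m] (mod 10)"
proof -
  have "[F 1 m = 1] (mod 2)" using b_cong2[of m] by simp
  moreover have "[(3::nat)^m = 1^m] (mod 2)" by (rule cong_pow) (simp add: cong_def)
  ultimately have "[F 1 m = 3^m] (mod 2)" by (metis cong_sym cong_trans power_one)
  then have "[F 1 m = 3^m] (mod 2*5)" using b_cong5[of m] by (intro coprime_cong_mult_nat) auto
  then show ?thesis by simp
qed

lemma A_cong24: "[F 2 m = 5^m] (mod 24)"
proof -
  have "[F 2 m = 5^m] (mod 8*3)" using A_cong8[of m] A_cong3[of m]
    by (intro coprime_cong_mult_nat) (auto simp: coprime_iff_gcd_eq_1 gcd_non_0_nat)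
  then show ?thesis by simp
qed

lemma int_step:
  fixes d c e :: nat
  assumes "\<And>m. [F e m = c^m] (mod d)"
  shows "int d dvd int (F e (Suc m)) - int c * int (F e m)"
proof -
  have 1: "[int (F e (Suc m)) = int c ^ Suc m] (mod int d)" using assms[of "Suc m"]
    by (metis cong_int_iff of_nat_power)
  have 2: "[int c * int (F e m) = int c * int c ^ m] (mod int d)" using assms[of m]
    by (intro cong_scalar_left) (metis cong_int_iff of_nat_power)
  have "[int (F e (Suc m)) - int c * int (F e m) = int c ^ Suc m - int c * int c ^ m] (mod int d)"
    by (rule cong_diff[OF 1 2])
  then show ?thesis by (simp add: cong_0_iff)
qed

theorem theorem1p3:
  fixes n :: nat
  shows "(of_int (hankel_det apery_b n) / 10 ^ n :: rat) \<in> \<int> \<and>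
         (of_int (hankel_det apery_A n) / 24 ^ n :: rat) \<in> \<int>"
proof -
  have "10^n dvd hankel_det apery_b n"
  proof (rule hankel_dvd)
    fix m show "10 dvd apery_b (Suc m) - 3 * apery_b m"
      using int_step[of 1 3 10 m, OF b_cong10] by (simp add: apery_b_F)
  qed
  then obtain t where t: "hankel_det apery_b n = 10^n * t" by blast
  have "24^n dvd hankel_det apery_A n"
  proof (rule hankel_dvd)
    fix m show "24 dvd apery_A (Suc m) - 5 * apery_A m"
      using int_step[of 2 5 24 m, OF A_cong24] by (simp add: apery_A_F)
  qed
  then obtain u where u: "hankel_det apery_A n = 24^n * u" by blast
  have "(of_int (hankel_det apery_b n) / 10 ^ n :: rat) = of_int t" by (simp add: t)
  moreover have "(of_int (hankel_det apery_A n) / 24 ^ n :: rat) = of_int u" by (simp add: u)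
  ultimately show ?thesis by simp
qed


end
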